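(* Let $\mathbf A\in\mathbb H^{m\times n}$ and $t\in\mathbb R$. Then for all $i=1,\dots,n$ and $j=1,\dots,m$, \[ \operatorname{rdet}_j\big((t\mathbf I+\mathbf A\mathbf A^{*})_{j.}(\mathbf a^{*}_{i.})\big)=r_1^{(ij)}t^{m-1}+r_2^{(ij)}t^{m-2}+\dots+r_m^{(ij)}, \] where $r_m^{(ij)}=\operatorname{rdet}_j\big((\mathbf A\mathbf A^{*})_{j.}(\mathbf a^{*}_{i.})\big)$ and $r_k^{(ij)}=\sum_{\alpha\in I_{k,m}\{j\}}\operatorname{rdet}_j\Big(\big((\mathbf A\mathbf A^{*})_{j.}(\mathbf a^{*}_{i.})\big)^{\alpha}_{\alpha}\Big)$ for $k=1,\dots,m-1$.
   Context: $\mathbb H$ is the quaternion skew field, $\mathbf A^*$ the conjugate transpose, $\mathbf a^*_{i.}$ the $i$th row of $\mathbf A^*$; $\mathbf M_{j.}(\mathbf b)$ is $\mathbf M$ with its $j$th row replaced by the row $\mathbf b$. Row determinant of $\mathbf M=(m_{ab})\in\mathbb H^{m\times m}$: $\operatorname{rdet}_j\mathbf M=\sum_{\sigma\in S_m}(-1)^{m-r}m_{j\,j_{k_1}}m_{j_{k_1}j_{k_1+1}}\cdots m_{j_{k_1+l_1}\,j}\cdots m_{j_{k_r}j_{k_r+1}}\cdots m_{j_{k_r+l_r}j_{k_r}}$, where $\sigma=(j\,j_{k_1}\dots j_{k_1+l_1})(j_{k_2}\dots j_{k_2+l_2})\cdots(j_{k_r}\dots j_{k_r+l_r})$ is the decomposition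 of $\sigma$ into $r$ disjoint cycles (fixed points included), the first cycle starting with $j$, each other cycle starting with its smallest element, and $j_{k_2}<\dots<j_{k_r}$. $L_{k,m}$ is the set of strictly increasing $k$-sequences from $\{1,\dots,m\}$ and $I_{k,m}\{j\}=\{\alpha\in L_{k,m}:j\in\alpha\}$. $\mathbf N^{\alpha}_{\alpha}$ is the principal submatrix with rows and columns indexed by $\alpha$; in $\operatorname{rdet}_j(\mathbf N^\alpha_\alpha)$ the subscript $j$ refers to the row of the submatrix coming from row $j$ of $\mathbf N$. *)

theory Defs
  imports Complex_Main "HOL-Combinatorics.Permutations"
begin

section \<open>Quaternions (the skew field H, only the ring structure is needed here)\<close>

datatype quat = Quat (qre: real) (qi: real) (qj: real) (qk: real)

instantiation quat :: ring_1
begin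
definition "0 = Quat 0 0 0 0"
definition "1 = Quat 1 0 0 0"
definition "x + y = Quat (qre x + qre y) (qi x + qi y) (qj x + qj y) (qk x + qk y)"
definition "x - y = Quat (qre x - qre y) (qi x - qi y) (qj x - qj y) (qk x - qk y)"
definition "- x = Quat (- qre x) (- qi x) (- qj x) (- qk x)"
definition "x * y = Quat
   (qre x * qre y - qi x * qi y - qj x * qj y - qk x * qk y)
   (qre x * qi y + qi x * qre y + qj x * qk y - qk x * qj y)
   (qre x * qj y - qi x * qk y + qj x * qre y + qk x * qi y)
   (qre x * qk y + qi x * qj y - qj x * qi y + qk x * qre y)"
instance
  by standard (auto simp: zero_quat_def one_quat_def plus_quat_def minus_quat_def
      uminus_quat_def times_quat_def algebra_simps intro: quat.expand)
end

definition qcnj :: "quat \<Rightarrow> quat" where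
  "qcnj x = Quat (qre x) (- qi x) (- qj x) (- qk x)"

definition qreal :: "real \<Rightarrow> quat" where
  "qreal t = Quat t 0 0 0"

section \<open>Matrices as functions on 1-based indices\<close>

type_synonym qmat = "nat \<Rightarrow> nat \<Rightarrow> quat"

definition ctrans :: "qmat \<Rightarrow> qmat" where
  "ctrans A = (\<lambda>a b. qcnj (A b a))"

text \<open>product of an m x n and an n x p matrix (only n is needed)\<close>
definition qmult :: "nat \<Rightarrow> qmat \<Rightarrow> qmat \<Rightarrow> qmat" where
  "qmult n A B = (\<lambda>a b. \<Sum>l = 1..n. A a l * B l b)"

definition qid :: qmat where
  "qid = (\<lambda>a b. if a = b then 1 else 0)"

definition qsmult :: "real \<Rightarrow> qmat \<Rightarrow> qmat" where
  "qsmult t M = (\<lambda>a b. qreal t * M a b)"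

definition qadd :: "qmat \<Rightarrow> qmat \<Rightarrow> qmat" where
  "qadd M N = (\<lambda>a b. M a b + N a b)"

definition row :: "qmat \<Rightarrow> nat \<Rightarrow> (nat \<Rightarrow> quat)" where
  "row M i = (\<lambda>b. M i b)"

definition replace_row :: "qmat \<Rightarrow> nat \<Rightarrow> (nat \<Rightarrow> quat) \<Rightarrow> qmat" where
  "replace_row M j b = (\<lambda>a c. if a = j then b c else M a c)"

definition orbit :: "(nat \<Rightarrow> nat) \<Rightarrow> nat \<Rightarrow> nat set" where
  "orbit \<sigma> a = {(\<sigma> ^^ p) a | p. True}"

definition cyc_len :: "(nat \<Rightarrow> nat) \<Rightarrow> nat \<Rightarrow> nat" where
  "cyc_len \<sigma> a = (LEAST p. 0 < p \<and> (\<sigma> ^^ p) a = a)"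

definition cyc_prod :: "qmat \<Rightarrow> (nat \<Rightarrow> nat) \<Rightarrow> nat \<Rightarrow> quat" where
  "cyc_prod M \<sigma> a =
     prod_list (map (\<lambda>p. M ((\<sigma> ^^ p) a) ((\<sigma> ^^ Suc p) a)) [0..<cyc_len \<sigma> a])"

definition other_leaders :: "nat \<Rightarrow> nat \<Rightarrow> (nat \<Rightarrow> nat) \<Rightarrow> nat list" where
  "other_leaders m j \<sigma> = sorted_list_of_set
     {a \<in> {1..m}. a \<notin> orbit \<sigma> j \<and> a = Min (orbit \<sigma> a)}"

text \<open>row determinant rdet_j of an m x m quaternion matrix M (indices 1..m);
  the number of cycles r is 1 + length of other_leaders\<close>
definition rdet :: "nat \<Rightarrow> nat \<Rightarrow> qmat \<Rightarrow> quat" where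
  "rdet m j M = (\<Sum>\<sigma> | \<sigma> permutes {1..m}.
      (- 1) ^ (m - (1 + length (other_leaders m j \<sigma>))) *
      (cyc_prod M \<sigma> j * prod_list (map (cyc_prod M \<sigma>) (other_leaders m j \<sigma>))))"

definition Lseq :: "nat \<Rightarrow> nat \<Rightarrow> nat list set" where
  "Lseq k m = {\<alpha>. length \<alpha> = k \<and> sorted_wrt (<) \<alpha> \<and> set \<alpha> \<subseteq> {1..m}}"

definition Iseq :: "nat \<Rightarrow> nat \<Rightarrow> nat \<Rightarrow> nat list set" where
  "Iseq k m j = {\<alpha> \<in> Lseq k m. j \<in> set \<alpha>}"

text \<open>principal submatrix N^\<alpha>_\<alpha>, indexed 1..length \<alpha>\<close>
definition principal_sub :: "qmat \<Rightarrow> nat list \<Rightarrow> qmat" where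
  "principal_sub N \<alpha> = (\<lambda>a b. N (\<alpha> ! (a - 1)) (\<alpha> ! (b - 1)))"

text \<open>the row index in N^\<alpha>_\<alpha> of the row coming from row j of N\<close>
definition sub_pos :: "nat list \<Rightarrow> nat \<Rightarrow> nat" where
  "sub_pos \<alpha> j = Suc (LEAST p. \<alpha> ! p = j)"

end

theory Submission
  imports Defs
begin

lemma qreal_central: "qreal t * x = x * qreal t"
  by (cases x) (simp add: qreal_def times_quat_def)

lemma qreal_mult: "qreal (a*b) = qreal a * qreal b"
  by (simp add: qreal_def times_quat_def)

lemma qreal_pow: "qreal (t ^ p) = qreal t ^ p"
  by (induction p) (simp_all add: qreal_mult, simp add: qreal_def one_quat_def)

lemma central_pow: "(\<And>x. c * x = x * (c::'a::ring_1)) \<Longrightarrow> c ^ p * x = x * c ^ p"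
  by (induction p) (simp_all add: mult.assoc, metis mult.assoc)

lemma sls_eq: "finite X \<Longrightarrow> sorted_wrt (<) xs \<Longrightarrow> set xs = X \<Longrightarrow> sorted_list_of_set X = xs"
  by (metis sorted_list_of_set.sorted_key_list_of_set_unique distinct_card strict_sorted_iff subset_UNIV map_ident)

lemma sls_diff: "finite A \<Longrightarrow> sorted_list_of_set (A - S) = filter (\<lambda>x. x \<notin> S) (sorted_list_of_set A)"
  by (rule sls_eq) (auto intro: sorted_wrt_filter)


lemma prod_expand:
  fixes \<tau> :: "'a::ring_1"
  assumes "distinct xs" and c: "\<And>x. \<tau> * x = x * \<tau>"
  shows "prod_list (map (\<lambda>a. f a + (if a \<in> F then \<tau> else 0)) xs)
       = (\<Sum>S\<in>Pow (F \<inter> set xs). \<tau> ^ card S * prod_list (map f (filter (\<lambda>a. a \<notin> S) xs)))"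
  using assms(1)
proof (induction xs)
  case Nil
  then show ?case by simp
next
  case (Cons x xs)
  let ?B = "F \<inter> set xs"
  let ?P = "\<lambda>S. \<tau> ^ card S * prod_list (map f (filter (\<lambda>a. a \<notin> S) xs))"
  have IH: "prod_list (map (\<lambda>a. f a + (if a \<in> F then \<tau> else 0)) xs) = (\<Sum>S\<in>Pow ?B. ?P S)"
    using Cons by simp
  have xn: "x \<notin> set xs" using Cons by simp
  have fx: "f x * (\<Sum>S\<in>Pow ?B. ?P S) = (\<Sum>S\<in>Pow ?B. \<tau> ^ card S * prod_list (map f (filter (\<lambda>a. a \<notin> S) (x#xs))))"
  proof -
    have "f x * (\<Sum>S\<in>Pow ?B. ?P S) = (\<Sum>S\<in>Pow ?B. f x * ?P S)" by (simp add: sum_distrib_left)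
    also have "\<dots> = (\<Sum>S\<in>Pow ?B. \<tau> ^ card S * prod_list (map f (filter (\<lambda>a. a \<notin> S) (x#xs))))"
    proof (rule sum.cong)
      fix S assume "S \<in> Pow ?B"
      then have "x \<notin> S" using xn by auto
      then show "f x * ?P S = \<tau> ^ card S * prod_list (map f (filter (\<lambda>a. a \<notin> S) (x#xs)))"
        using central_pow[OF c, of "card S" "f x"] by (simp add: mult.assoc[symmetric])
    qed simp
    finally show ?thesis .
  qed
  show ?case
  proof (cases "x \<in> F")
    case False
    then have "F \<inter> set (x#xs) = ?B" by auto
    then show ?thesis using False IH fx by simp
  next
    case True
    have fin: "finite (Pow ?B)" by simp
    have PI: "Pow (F \<inter> set (x#xs)) = Pow ?B \<union> insert x ` Pow ?B"
      using True by (auto simp: Pow_insert)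
    have dis: "Pow ?B \<inter> insert x ` Pow ?B = {}" using xn by auto
    have inj: "inj_on (insert x) (Pow ?B)" using xn by (auto simp: inj_on_def)
    have tx: "\<tau> * (\<Sum>S\<in>Pow ?B. ?P S) = (\<Sum>S\<in>insert x ` Pow ?B. \<tau> ^ card S * prod_list (map f (filter (\<lambda>a. a \<notin> S) (x#xs))))"
    proof -
      have "(\<Sum>S\<in>insert x ` Pow ?B. \<tau> ^ card S * prod_list (map f (filter (\<lambda>a. a \<notin> S) (x#xs))))
          = (\<Sum>S\<in>Pow ?B. \<tau> ^ card (insert x S) * prod_list (map f (filter (\<lambda>a. a \<notin> insert x S) (x#xs))))"
        by (rule sum.reindex[OF inj, unfolded comp_def])
      also have "\<dots> = (\<Sum>S\<in>Pow ?B. \<tau> * ?P S)"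
      proof (rule sum.cong)
        fix S assume S: "S \<in> Pow ?B"
        then have "x \<notin> S" "finite S" using xn finite_subset by auto
        moreover have "filter (\<lambda>a. a \<notin> insert x S) xs = filter (\<lambda>a. a \<notin> S) xs"
          using xn by (auto intro!: filter_cong)
        ultimately show "\<tau> ^ card (insert x S) * prod_list (map f (filter (\<lambda>a. a \<notin> insert x S) (x#xs))) = \<tau> * ?P S"
          by (simp add: mult.assoc)
      qed simp
      finally show ?thesis by (simp add: sum_distrib_left)
    qed
    have "prod_list (map (\<lambda>a. f a + (if a \<in> F then \<tau> else 0)) (x#xs)) = (f x + \<tau>) * (\<Sum>S\<in>Pow ?B. ?P S)"
      using True IH by simp
    also have "\<dots> = f x * (\<Sum>S\<in>Pow ?B. ?P S) + \<tau> * (\<Sum>S\<in>Pow ?B. ?P S)" by (simp add: distrib_right)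
    also have "\<dots> = (\<Sum>S\<in>Pow (F \<inter> set (x#xs)). \<tau> ^ card S * prod_list (map f (filter (\<lambda>a. a \<notin> S) (x#xs))))"
      unfolding fx tx PI by (rule sum.union_disjoint[symmetric]) (use dis in auto)
    finally show ?thesis .
  qed
qed


definition leadersS :: "nat set \<Rightarrow> nat \<Rightarrow> (nat \<Rightarrow> nat) \<Rightarrow> nat list" where
  "leadersS T j \<sigma> = sorted_list_of_set {a \<in> T. a \<notin> orbit \<sigma> j \<and> a = Min (orbit \<sigma> a)}"

definition rdetS :: "nat set \<Rightarrow> nat \<Rightarrow> qmat \<Rightarrow> quat" where
  "rdetS T j M = (\<Sum>\<sigma> | \<sigma> permutes T.
      (- 1) ^ (card T - (1 + length (leadersS T j \<sigma>))) *
      (cyc_prod M \<sigma> j * prod_list (map (cyc_prod M \<sigma>) (leadersS T j \<sigma>))))"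

lemma rdet_S: "rdet m j M = rdetS {1..m} j M"
  by (simp add: rdet_def rdetS_def other_leaders_def leadersS_def)

lemma fix_iter: "\<sigma> a = a \<Longrightarrow> (\<sigma> ^^ p) a = a"
  by (induction p) auto

lemma fp_back: "inj \<sigma> \<Longrightarrow> \<sigma> ((\<sigma> ^^ p) a) = (\<sigma> ^^ p) a \<Longrightarrow> \<sigma> a = a"
proof -
  assume i: "inj \<sigma>" and e: "\<sigma> ((\<sigma> ^^ p) a) = (\<sigma> ^^ p) a"
  have "(\<sigma> ^^ p) (\<sigma> a) = (\<sigma> ^^ p) a" using e by (simp add: funpow_swap1)
  moreover have "inj (\<sigma> ^^ p)" using i by (rule inj_fn)
  ultimately show ?thesis by (meson injD)
qed

lemma cyc_len_fix: "\<sigma> a = a \<Longrightarrow> cyc_len \<sigma> a = 1"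
  unfolding cyc_len_def by (rule Least_equality) simp_all

lemma cyc_prod_fix: "\<sigma> a = a \<Longrightarrow> cyc_prod N \<sigma> a = N a a"
  by (simp add: cyc_prod_def cyc_len_fix)

lemma cyc_prod_L:
  assumes "inj \<sigma>" "\<sigma> a \<noteq> a"
  shows "cyc_prod (\<lambda>a c. M a c + (if a = c \<and> a \<noteq> j then \<tau> else 0)) \<sigma> a = cyc_prod M \<sigma> a"
  unfolding cyc_prod_def
proof (rule arg_cong[where f=prod_list], rule map_cong[OF refl])
  fix p
  have "(\<sigma> ^^ p) a \<noteq> (\<sigma> ^^ Suc p) a" using fp_back[OF assms(1), of p a] assms(2) by auto
  then show "M ((\<sigma> ^^ p) a) ((\<sigma> ^^ Suc p) a) + (if (\<sigma> ^^ p) a = (\<sigma> ^^ Suc p) a \<and> (\<sigma> ^^ p) a \<noteq> j then \<tau> else 0)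
     = M ((\<sigma> ^^ p) a) ((\<sigma> ^^ Suc p) a)" by simp
qed

lemma cyc_prod_Lj:
  assumes "inj \<sigma>"
  shows "cyc_prod (\<lambda>a c. M a c + (if a = c \<and> a \<noteq> j then \<tau> else 0)) \<sigma> j = cyc_prod M \<sigma> j"
  by (cases "\<sigma> j = j") (simp_all add: cyc_prod_fix cyc_prod_L assms)

lemma cyc_prod_Lfix:
  assumes "\<sigma> a = a" "a \<noteq> j"
  shows "cyc_prod (\<lambda>a c. M a c + (if a = c \<and> a \<noteq> j then \<tau> else 0)) \<sigma> a = cyc_prod M \<sigma> a + \<tau>"
  using assms by (simp add: cyc_prod_fix)

lemma in_orbit: "a \<in> orbit \<sigma> a"
  unfolding orbit_def by (auto intro: exI[of _ 0])

lemma orbit_fix: "\<sigma> a = a \<Longrightarrow> orbit \<sigma> a = {a}"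
  unfolding orbit_def by (auto simp: fix_iter intro: exI[of _ 0])

lemma fix_not_orbit: "inj \<sigma> \<Longrightarrow> \<sigma> a = a \<Longrightarrow> a \<noteq> j \<Longrightarrow> a \<notin> orbit \<sigma> j"
proof
  assume i: "inj \<sigma>" and f: "\<sigma> a = a" and n: "a \<noteq> j" and "a \<in> orbit \<sigma> j"
  then obtain p where p: "a = (\<sigma> ^^ p) j" unfolding orbit_def by auto
  then have "\<sigma> j = j" using fp_back[OF i, of p j] f by simp
  then have "(\<sigma> ^^ p) j = j" by (rule fix_iter)
  then show False using p n by simp
qed

lemma leaders_set:
  assumes "finite T"
  shows "set (leadersS T j \<sigma>) = {a \<in> T. a \<notin> orbit \<sigma> j \<and> a = Min (orbit \<sigma> a)}"
    "distinct (leadersS T j \<sigma>)"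
  using assms by (simp_all add: leadersS_def)

lemma fix_leaders:
  assumes "finite T" "inj \<sigma>" "a \<in> T" "a \<noteq> j" "\<sigma> a = a"
  shows "a \<in> set (leadersS T j \<sigma>)"
  using assms by (simp add: leaders_set orbit_fix fix_not_orbit)

lemma leaders_len:
  assumes "finite T" "j \<in> T"
  shows "1 + length (leadersS T j \<sigma>) \<le> card T"
proof -
  have "set (leadersS T j \<sigma>) \<subseteq> T - {j}" using assms in_orbit[of j \<sigma>] by (auto simp: leaders_set)
  then have "card (set (leadersS T j \<sigma>)) \<le> card (T - {j})" using assms by (intro card_mono) auto
  then show ?thesis using assms distinct_card[OF leaders_set(2)[OF assms(1)]]
    using card_gt_0_iff[of T] by (simp add: card_Diff_singleton) (metis Suc_le_eq le_imp_less_Suc Suc_pred empty_iff) 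
qed


lemma central_move:
  assumes "\<And>x. \<tau> * x = x * (\<tau>::'a::ring_1)"
  shows "a * (b * (\<tau> ^ s * p)) = \<tau> ^ s * (a * (b * p))"
  by (metis central_pow[OF assms] mult.assoc)

lemma expand:
  fixes \<tau> :: quat
  assumes fin: "finite T" and jT: "j \<in> T" and cen: "\<And>x. \<tau> * x = x * \<tau>"
  shows "rdetS T j (\<lambda>a c. M a c + (if a = c \<and> a \<noteq> j then \<tau> else 0))
       = (\<Sum>S\<in>Pow (T - {j}). \<tau> ^ card S * rdetS (T - S) j M)"
proof -
  let ?L = "\<lambda>a c. M a c + (if a = c \<and> a \<noteq> j then \<tau> else 0)"
  define Fx where "Fx \<sigma> = {a\<in>T. a \<noteq> j \<and> \<sigma> a = a}" for \<sigma> :: "nat \<Rightarrow> nat"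
  define sg where "sg \<sigma> = ((- 1) ^ (card T - (1 + length (leadersS T j \<sigma>))) :: quat)" for \<sigma>
  define G where "G \<sigma> S = \<tau> ^ card S * (sg \<sigma> * (cyc_prod M \<sigma> j *
     prod_list (map (cyc_prod M \<sigma>) (filter (\<lambda>a. a \<notin> S) (leadersS T j \<sigma>)))))" for \<sigma> S
  have step1: "sg \<sigma> * (cyc_prod ?L \<sigma> j * prod_list (map (cyc_prod ?L \<sigma>) (leadersS T j \<sigma>)))
      = (\<Sum>S\<in>Pow (Fx \<sigma>). G \<sigma> S)" if p: "\<sigma> permutes T" for \<sigma>
  proof -
    have inj: "inj \<sigma>" using p by (rule permutes_inj)
    let ?ls = "leadersS T j \<sigma>"
    have m: "map (cyc_prod ?L \<sigma>) ?ls = map (\<lambda>a. cyc_prod M \<sigma> a + (if a \<in> {a. \<sigma> a = a} then \<tau> else 0)) ?ls"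
    proof (rule map_cong[OF refl])
      fix a assume "a \<in> set ?ls"
      then have "a \<noteq> j" using in_orbit[of j \<sigma>] by (auto simp: leaders_set[OF fin])
      then show "cyc_prod ?L \<sigma> a = cyc_prod M \<sigma> a + (if a \<in> {a. \<sigma> a = a} then \<tau> else 0)"
        using cyc_prod_Lfix[of \<sigma> a j M \<tau>] cyc_prod_L[OF inj, of a M j \<tau>] by auto
    qed
    have F: "{a. \<sigma> a = a} \<inter> set ?ls = Fx \<sigma>"
      using fix_leaders[OF fin inj] in_orbit[of j \<sigma>] by (auto simp: leaders_set[OF fin] Fx_def)
    show ?thesis
      unfolding cyc_prod_Lj[OF inj] m prod_expand[OF leaders_set(2)[OF fin] cen] F
      by (simp add: sum_distrib_left G_def central_move[OF cen])
  qed
  have finP: "finite {\<sigma>. \<sigma> permutes T}" using fin by (rule finite_permutations)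
  have "rdetS T j ?L = (\<Sum>\<sigma>\<in>{\<sigma>. \<sigma> permutes T}. \<Sum>S\<in>Pow (Fx \<sigma>). G \<sigma> S)"
    unfolding rdetS_def sg_def[symmetric] by (rule sum.cong) (auto simp: step1)
  also have "\<dots> = (\<Sum>\<sigma>\<in>{\<sigma>. \<sigma> permutes T}. \<Sum>S\<in>{S. S \<in> Pow (T - {j}) \<and> S \<subseteq> Fx \<sigma>}. G \<sigma> S)"
    by (rule sum.cong) (auto simp: Fx_def intro!: sum.cong)
  also have "\<dots> = (\<Sum>S\<in>Pow (T - {j}). \<Sum>\<sigma>\<in>{\<sigma>. \<sigma> \<in> {\<sigma>. \<sigma> permutes T} \<and> S \<subseteq> Fx \<sigma>}. G \<sigma> S)"
    by (rule sum.swap_restrict) (use finP fin in auto)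
  also have "\<dots> = (\<Sum>S\<in>Pow (T - {j}). \<tau> ^ card S * rdetS (T - S) j M)"
  proof (rule sum.cong[OF refl])
    fix S assume S: "S \<in> Pow (T - {j})"
    have setq: "{\<sigma>. \<sigma> \<in> {\<sigma>. \<sigma> permutes T} \<and> S \<subseteq> Fx \<sigma>} = {\<sigma>. \<sigma> permutes T - S}"
    proof (intro set_eqI iffI)
      fix \<sigma> assume "\<sigma> \<in> {\<sigma>. \<sigma> \<in> {\<sigma>. \<sigma> permutes T} \<and> S \<subseteq> Fx \<sigma>}"
      then show "\<sigma> \<in> {\<sigma>. \<sigma> permutes T - S}" by (auto simp: permutes_def Fx_def)
    next
      fix \<sigma> assume "\<sigma> \<in> {\<sigma>. \<sigma> permutes T - S}"
      then have "\<sigma> permutes T - S" by simp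
      then show "\<sigma> \<in> {\<sigma>. \<sigma> \<in> {\<sigma>. \<sigma> permutes T} \<and> S \<subseteq> Fx \<sigma>}"
        using S by (auto simp: Fx_def permutes_not_in intro: permutes_subset)
    qed
    have tm: "G \<sigma> S = \<tau> ^ card S * ((- 1) ^ (card (T - S) - (1 + length (leadersS (T - S) j \<sigma>))) *
      (cyc_prod M \<sigma> j * prod_list (map (cyc_prod M \<sigma>) (leadersS (T - S) j \<sigma>))))"
      if sp: "\<sigma> permutes T - S" for \<sigma>
    proof -
      have pT: "\<sigma> permutes T" using sp by (rule permutes_subset) auto
      have inj: "inj \<sigma>" using pT by (rule permutes_inj)
      let ?ls = "leadersS T j \<sigma>"
      have lq: "leadersS (T - S) j \<sigma> = filter (\<lambda>a. a \<notin> S) ?ls"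
      proof -
        have "{a \<in> T - S. a \<notin> orbit \<sigma> j \<and> a = Min (orbit \<sigma> a)} = {a \<in> T. a \<notin> orbit \<sigma> j \<and> a = Min (orbit \<sigma> a)} - S"
          by auto
        then show ?thesis unfolding leadersS_def using fin by (simp add: sls_diff)
      qed
      have Sl: "S \<subseteq> set ?ls"
      proof
        fix a assume "a \<in> S"
        then show "a \<in> set ?ls" using S permutes_not_in[OF sp] by (intro fix_leaders[OF fin inj]) auto
      qed
      have "set (filter (\<lambda>a. a \<in> S) ?ls) = S" using Sl by auto
      then have cS: "length (filter (\<lambda>a. a \<in> S) ?ls) = card S"
        using distinct_card[of "filter (\<lambda>a. a \<in> S) ?ls"] leaders_set(2)[OF fin] by simp
      have len: "length (filter (\<lambda>a. a \<notin> S) ?ls) + card S = length ?ls"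
        using sum_length_filter_compl[of "\<lambda>a. a \<in> S" ?ls] cS by simp
      have cT: "card (T - S) = card T - card S" using S fin by (intro card_Diff_subset) (auto intro: finite_subset)
      have "card (T - S) - (1 + length (leadersS (T - S) j \<sigma>)) = card T - (1 + length ?ls)"
        unfolding lq cT using len leaders_len[OF fin jT, of \<sigma>] by linarith
      then show ?thesis unfolding G_def sg_def lq by simp
    qed
    show "(\<Sum>\<sigma>\<in>{\<sigma>. \<sigma> \<in> {\<sigma>. \<sigma> permutes T} \<and> S \<subseteq> Fx \<sigma>}. G \<sigma> S) = \<tau> ^ card S * rdetS (T - S) j M"
      unfolding setq rdetS_def sum_distrib_left by (rule sum.cong) (auto simp: tm)
  qed
  finally show ?thesis .
qed


lemma Min_mono_image:
  fixes h :: "nat \<Rightarrow> nat"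
  assumes "strict_mono_on A h" "finite X" "X \<noteq> {}" "X \<subseteq> A"
  shows "Min (h ` X) = h (Min X)"
proof (rule Min_eqI)
  show "finite (h ` X)" using assms by simp
  show "h (Min X) \<in> h ` X" using assms by simp
  fix y assume "y \<in> h ` X"
  then obtain x where "x \<in> X" "y = h x" by auto
  moreover have "Min X \<le> x" using assms \<open>x \<in> X\<close> by simp
  moreover have "Min X \<in> A" using assms(4) Min_in[OF assms(2,3)] by blast
  ultimately show "h (Min X) \<le> y" using assms by (auto intro: strict_mono_on_leD[OF assms(1)])
qed

lemma smap: "strict_mono_on A (h::nat\<Rightarrow>nat) \<Longrightarrow> sorted_wrt (<) xs \<Longrightarrow> set xs \<subseteq> A \<Longrightarrow> sorted_wrt (\<lambda>x y. h x < h y) xs"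
  by (induction xs) (auto simp: strict_mono_on_def)

lemma sls_image:
  fixes h :: "nat \<Rightarrow> nat"
  assumes "strict_mono_on A h" "finite X" "X \<subseteq> A"
  shows "sorted_list_of_set (h ` X) = map h (sorted_list_of_set X)"
proof (rule sls_eq)
  show "finite (h ` X)" using assms by simp
  show "set (map h (sorted_list_of_set X)) = h ` X" using assms by simp
  have "sorted_wrt (<) (sorted_list_of_set X)" by simp
  moreover have "set (sorted_list_of_set X) \<subseteq> A" using assms by simp
  ultimately show "sorted_wrt (<) (map h (sorted_list_of_set X))"
    unfolding sorted_wrt_map
    using smap[OF assms(1)] by blast
qed

lemma iter_in: "\<sigma> permutes A \<Longrightarrow> x \<in> A \<Longrightarrow> (\<sigma> ^^ p) x \<in> A"
  by (induction p) (auto simp: permutes_in_image)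

lemma conj_rdet:
  fixes h :: "nat \<Rightarrow> nat"
  assumes fin: "finite A" and sm: "strict_mono_on A h" and jA: "j' \<in> A"
  shows "rdetS (h ` A) (h j') N = rdetS A j' (\<lambda>a b. N (h a) (h b))"
proof -
  have inj: "inj_on h A" using sm by (rule strict_mono_on_imp_inj_on)
  have bh: "bij_betw h A (h ` A)" using inj by (simp add: bij_betw_def)
  define hi where "hi = the_inv_into A h"
  have bhi: "bij_betw hi (h ` A) A" unfolding hi_def by (rule bij_betw_the_inv_into[OF bh])
  have hih: "hi (h x) = x" if "x \<in> A" for x unfolding hi_def using the_inv_into_f_f[OF inj that] .
  have hhi: "h (hi y) = y" if "y \<in> h ` A" for y unfolding hi_def using f_the_inv_into_f[OF inj that] .
  have hiA: "hi y \<in> A" if "y \<in> h ` A" for y using that hih by auto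
  define \<Phi> where "\<Phi> \<sigma>' = (\<lambda>x. if x \<in> h ` A then h (\<sigma>' (hi x)) else x)" for \<sigma>' :: "nat \<Rightarrow> nat"
  define \<Psi> where "\<Psi> \<sigma> = (\<lambda>y. if y \<in> A then hi (\<sigma> (h y)) else y)" for \<sigma> :: "nat \<Rightarrow> nat"
  let ?N' = "\<lambda>a b. N (h a) (h b)"
  let ?tA = "\<lambda>M T j \<sigma>. (- 1::quat) ^ (card T - (1 + length (leadersS T j \<sigma>))) *
      (cyc_prod M \<sigma> j * prod_list (map (cyc_prod M \<sigma>) (leadersS T j \<sigma>)))"
  have Phip: "\<Phi> \<sigma>' permutes h ` A" if p: "\<sigma>' permutes A" for \<sigma>'
  proof (rule bij_imp_permutes)
    have "bij_betw (h \<circ> (\<sigma>' \<circ> hi)) (h ` A) (h ` A)"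
      by (rule bij_betw_trans[OF bij_betw_trans[OF bhi permutes_imp_bij[OF p]] bh])
    then show "bij_betw (\<Phi> \<sigma>') (h ` A) (h ` A)" by (rule bij_betw_cong[THEN iffD1, rotated]) (simp add: \<Phi>_def)
  qed (simp add: \<Phi>_def)
  have Psip: "\<Psi> \<sigma> permutes A" if p: "\<sigma> permutes h ` A" for \<sigma>
  proof (rule bij_imp_permutes)
    have "bij_betw (hi \<circ> (\<sigma> \<circ> h)) A A"
      by (rule bij_betw_trans[OF bij_betw_trans[OF bh permutes_imp_bij[OF p]] bhi])
    then show "bij_betw (\<Psi> \<sigma>) A A" by (rule bij_betw_cong[THEN iffD1, rotated]) (simp add: \<Psi>_def)
  qed (simp add: \<Psi>_def)
  have PsiPhi: "\<Psi> (\<Phi> \<sigma>') = \<sigma>'" if p: "\<sigma>' permutes A" for \<sigma>'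
  proof
    fix y show "\<Psi> (\<Phi> \<sigma>') y = \<sigma>' y"
      using hih permutes_in_image[OF p] permutes_not_in[OF p] by (auto simp: \<Psi>_def \<Phi>_def)
  qed
  have PhiPsi: "\<Phi> (\<Psi> \<sigma>) = \<sigma>" if p: "\<sigma> permutes h ` A" for \<sigma>
  proof
    fix x show "\<Phi> (\<Psi> \<sigma>) x = \<sigma> x"
    proof (cases "x \<in> h ` A")
      case True
      then have "\<sigma> x \<in> h ` A" using permutes_in_image[OF p] by simp
      then show ?thesis using True hiA hhi hih by (auto simp: \<Psi>_def \<Phi>_def)
    next
      case False
      then show ?thesis using permutes_not_in[OF p] by (simp add: \<Phi>_def)
    qed
  qed
  have core: "?tA N (h ` A) (h j') (\<Phi> \<sigma>') = ?tA ?N' A j' \<sigma>'" if p: "\<sigma>' permutes A" for \<sigma>'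
  proof -
    define \<sigma> where "\<sigma> = \<Phi> \<sigma>'"
    have it: "(\<sigma> ^^ q) (h x) = h ((\<sigma>' ^^ q) x)" if "x \<in> A" for x q
    proof (induction q)
      case (Suc q)
      have "(\<sigma>' ^^ q) x \<in> A" using iter_in[OF p that] .
      then show ?case using Suc hih by (simp add: \<sigma>_def \<Phi>_def)
    qed simp
    have orb: "orbit \<sigma> (h x) = h ` orbit \<sigma>' x" if "x \<in> A" for x
      unfolding orbit_def using it[OF that] by auto
    have orbA: "orbit \<sigma>' x \<subseteq> A" if "x \<in> A" for x
      unfolding orbit_def using iter_in[OF p that] by auto
    have cl: "cyc_len \<sigma> (h x) = cyc_len \<sigma>' x" if "x \<in> A" for x
    proof -
      have "(\<sigma> ^^ q) (h x) = h x \<longleftrightarrow> (\<sigma>' ^^ q) x = x" for q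
        using it[OF that] inj iter_in[OF p that] that by (auto dest: inj_onD)
      then show ?thesis unfolding cyc_len_def by simp
    qed
    have cp: "cyc_prod N \<sigma> (h x) = cyc_prod ?N' \<sigma>' x" if "x \<in> A" for x
      unfolding cyc_prod_def cl[OF that] using it[OF that] by (simp del: funpow.simps)
    have lead: "leadersS (h ` A) (h j') \<sigma> = map h (leadersS A j' \<sigma>')"
    proof -
      have "{a \<in> h ` A. a \<notin> orbit \<sigma> (h j') \<and> a = Min (orbit \<sigma> a)}
          = h ` {b \<in> A. b \<notin> orbit \<sigma>' j' \<and> b = Min (orbit \<sigma>' b)}"
      proof -
        have key: "(h b \<notin> orbit \<sigma> (h j') \<and> h b = Min (orbit \<sigma> (h b))) \<longleftrightarrow> (b \<notin> orbit \<sigma>' j' \<and> b = Min (orbit \<sigma>' b))"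
          if b: "b \<in> A" for b
        proof -
          have fo: "finite (orbit \<sigma>' b)" "orbit \<sigma>' b \<noteq> {}" "orbit \<sigma>' b \<subseteq> A"
            using orbA[OF b] fin in_orbit[of b \<sigma>'] finite_subset by auto
          have "Min (orbit \<sigma> (h b)) = h (Min (orbit \<sigma>' b))"
            unfolding orb[OF b] by (rule Min_mono_image[OF sm fo])
          moreover have "Min (orbit \<sigma>' b) \<in> A" using fo(3) Min_in[OF fo(1,2)] by blast
          moreover have "h b \<in> h ` orbit \<sigma>' j' \<longleftrightarrow> b \<in> orbit \<sigma>' j'"
            using orbA[OF jA] b inj by (auto dest: inj_onD)
          ultimately show ?thesis unfolding orb[OF jA] using b inj by (auto dest: inj_onD)
        qed
        show ?thesis using key by auto
      qed
      then show ?thesis unfolding leadersS_def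
        by (simp add: sls_image[OF sm finite_subset[OF _ fin]])
    qed
    have cA: "card (h ` A) = card A" using inj by (rule card_image)
    have lA: "set (leadersS A j' \<sigma>') \<subseteq> A" using fin by (auto simp: leaders_set)
    have "map (cyc_prod N \<sigma>) (map h (leadersS A j' \<sigma>')) = map (cyc_prod ?N' \<sigma>') (leadersS A j' \<sigma>')"
      using lA cp by auto
    then show ?thesis unfolding \<sigma>_def[symmetric] lead cA cp[OF jA] by (simp only: length_map)
  qed
  show ?thesis
    unfolding rdetS_def
    by (rule sum.reindex_bij_witness[symmetric, where i=\<Psi> and j=\<Phi>])
       (use core in \<open>auto simp: Phip Psip PsiPhi PhiPsi\<close>)
qed


lemma sub_rdet:
  assumes s: "sorted_wrt (<) \<alpha>" and j: "j \<in> set \<alpha>"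
  shows "rdet (length \<alpha>) (sub_pos \<alpha> j) (principal_sub N \<alpha>) = rdetS (set \<alpha>) j N"
proof -
  define h where "h p = \<alpha> ! (p - 1)" for p
  let ?A = "{1..length \<alpha>}"
  have img: "h ` ?A = set \<alpha>"
  proof
    show "h ` ?A \<subseteq> set \<alpha>" by (auto simp: h_def)
    show "set \<alpha> \<subseteq> h ` ?A"
    proof
      fix x assume "x \<in> set \<alpha>"
      then obtain p where "p < length \<alpha>" "\<alpha> ! p = x" by (auto simp: in_set_conv_nth)
      then show "x \<in> h ` ?A" by (auto simp: h_def intro!: image_eqI[of _ _ "Suc p"])
    qed
  qed
  have sm: "strict_mono_on ?A h"
    unfolding strict_mono_on_def h_def
  proof (intro allI impI)
    fix r s' assume "r \<in> ?A \<and> s' \<in> ?A \<and> r < s'"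
    then show "\<alpha> ! (r - 1) < \<alpha> ! (s' - 1)" using sorted_wrt_nth_less[OF s, of "r-1" "s'-1"] by auto
  qed
  obtain p where p: "p < length \<alpha>" "\<alpha> ! p = j" using j by (auto simp: in_set_conv_nth)
  have L: "\<alpha> ! (LEAST p. \<alpha> ! p = j) = j" "(LEAST p. \<alpha> ! p = j) \<le> p"
    using p by (auto intro: LeastI Least_le)
  have sp: "sub_pos \<alpha> j \<in> ?A" "h (sub_pos \<alpha> j) = j"
    using L p by (auto simp: sub_pos_def h_def)
  have ps: "principal_sub N \<alpha> = (\<lambda>a b. N (h a) (h b))" by (simp add: principal_sub_def h_def)
  show ?thesis
    unfolding rdet_S ps using conj_rdet[OF _ sm sp(1), of N] img sp(2) by simp
qed

theorem lemma4p4: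
  fixes A :: qmat and m n :: nat and t :: real
  assumes "i \<in> {1..n}" and "j \<in> {1..m}"
  shows "rdet m j (replace_row (qadd (qsmult t qid) (qmult n A (ctrans A))) j
                      (row (ctrans A) i))
       = (\<Sum>k = 1..m - 1.
            (\<Sum>\<alpha> \<in> Iseq k m j.
               rdet k (sub_pos \<alpha> j)
                 (principal_sub (replace_row (qmult n A (ctrans A)) j (row (ctrans A) i)) \<alpha>))
            * qreal (t ^ (m - k)))
         + rdet m j (replace_row (qmult n A (ctrans A)) j (row (ctrans A) i))"
proof -
  define M where "M = replace_row (qmult n A (ctrans A)) j (row (ctrans A) i)"
  define \<tau> where "\<tau> = qreal t"
  define T where "T = {1..m}"
  define V where "V = {U. U \<subseteq> T \<and> j \<in> U}"
  have jT: "j \<in> T" using assms by (simp add: T_def)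
  have finT: "finite T" by (simp add: T_def)
  have cT: "card T = m" by (simp add: T_def)
  have cen: "\<And>x. \<tau> * x = x * \<tau>" by (simp add: \<tau>_def qreal_central)
  have Lq: "replace_row (qadd (qsmult t qid) (qmult n A (ctrans A))) j (row (ctrans A) i)
      = (\<lambda>a c. M a c + (if a = c \<and> a \<noteq> j then \<tau> else 0))"
    by (intro ext) (auto simp: M_def \<tau>_def replace_row_def qadd_def qsmult_def qid_def)
  have "rdet m j (replace_row (qadd (qsmult t qid) (qmult n A (ctrans A))) j (row (ctrans A) i))
      = (\<Sum>S\<in>Pow (T - {j}). \<tau> ^ card S * rdetS (T - S) j M)"
    unfolding Lq rdet_S T_def[symmetric] using expand[OF finT jT cen] .
  also have "\<dots> = (\<Sum>U\<in>V. \<tau> ^ (m - card U) * rdetS U j M)"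
  proof (rule sum.reindex_bij_witness[where i="\<lambda>U. T - U" and j="\<lambda>S. T - S"])
    fix S assume S: "S \<in> Pow (T - {j})"
    then have ST: "S \<subseteq> T" by auto
    then have "card (T - S) = m - card S" "card S \<le> m"
      using finT cT card_mono[OF finT ST] card_Diff_subset[OF finite_subset[OF ST finT] ST] by auto
    then show "\<tau> ^ (m - card (T - S)) * rdetS (T - S) j M = \<tau> ^ card S * rdetS (T - S) j M" by simp
  qed (use jT in \<open>auto simp: V_def\<close>)
  also have "\<dots> = (\<Sum>k\<in>{1..m}. \<Sum>U\<in>{U. U \<in> V \<and> card U = k}. \<tau> ^ (m - card U) * rdetS U j M)"
  proof (rule sum.group[symmetric])
    show "finite V" using finT by (simp add: V_def)
    show "card ` V \<subseteq> {1..m}"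
    proof
      fix k assume "k \<in> card ` V"
      then obtain U where U: "U \<subseteq> T" "j \<in> U" "k = card U" by (auto simp: V_def)
      then have "finite U" using finT finite_subset by auto
      then show "k \<in> {1..m}" using U card_mono[OF finT U(1)] cT by (auto simp: card_gt_0_iff Suc_le_eq)
    qed
  qed simp
  also have "\<dots> = (\<Sum>k\<in>{1..m-1}. \<Sum>U\<in>{U. U \<in> V \<and> card U = k}. \<tau> ^ (m - card U) * rdetS U j M)
       + (\<Sum>U\<in>{U. U \<in> V \<and> card U = m}. \<tau> ^ (m - card U) * rdetS U j M)"
  proof -
    have m1: "m \<ge> 1" using assms by simp
    then have "{1..m} = insert m {1..m-1}" by auto
    then show ?thesis using m1 by (simp add: add.commute)
  qed
  also have "(\<Sum>U\<in>{U. U \<in> V \<and> card U = m}. \<tau> ^ (m - card U) * rdetS U j M) = rdetS T j M"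
  proof -
    have "{U. U \<in> V \<and> card U = m} = {T}"
      using jT cT finT by (auto simp: V_def dest: card_subset_eq[OF finT])
    then show ?thesis using cT by simp
  qed
  also have "(\<Sum>k\<in>{1..m-1}. \<Sum>U\<in>{U. U \<in> V \<and> card U = k}. \<tau> ^ (m - card U) * rdetS U j M)
      = (\<Sum>k = 1..m - 1. (\<Sum>\<alpha> \<in> Iseq k m j. rdet k (sub_pos \<alpha> j) (principal_sub M \<alpha>)) * qreal (t ^ (m - k)))"
  proof (rule sum.cong[OF refl])
    fix k assume "k \<in> {1..m-1}"
    have "(\<Sum>\<alpha> \<in> Iseq k m j. rdet k (sub_pos \<alpha> j) (principal_sub M \<alpha>)) = (\<Sum>\<alpha> \<in> Iseq k m j. rdetS (set \<alpha>) j M)"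
      by (rule sum.cong[OF refl]) (auto simp: Iseq_def Lseq_def sub_rdet[symmetric])
    also have "\<dots> = (\<Sum>U\<in>{U. U \<in> V \<and> card U = k}. rdetS U j M)"
    proof (rule sum.reindex_bij_witness[where i=sorted_list_of_set and j=set])
      fix \<alpha> assume "\<alpha> \<in> Iseq k m j"
      then have a: "sorted_wrt (<) \<alpha>" "length \<alpha> = k" "set \<alpha> \<subseteq> T" "j \<in> set \<alpha>"
        by (auto simp: Iseq_def Lseq_def T_def)
      show "sorted_list_of_set (set \<alpha>) = \<alpha>" using a by (intro sls_eq) auto
      show "set \<alpha> \<in> {U. U \<in> V \<and> card U = k}"
        using a by (auto simp: V_def strict_sorted_iff distinct_card)
    next
      fix U assume "U \<in> {U. U \<in> V \<and> card U = k}"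
      then have U: "U \<subseteq> T" "j \<in> U" "card U = k" "finite U" using finT finite_subset by (auto simp: V_def)
      show "set (sorted_list_of_set U) = U" using U by simp
      show "sorted_list_of_set U \<in> Iseq k m j" using U by (auto simp: Iseq_def Lseq_def T_def)
    qed simp
    finally have e: "(\<Sum>\<alpha> \<in> Iseq k m j. rdet k (sub_pos \<alpha> j) (principal_sub M \<alpha>)) = (\<Sum>U\<in>{U. U \<in> V \<and> card U = k}. rdetS U j M)" .
    show "(\<Sum>U\<in>{U. U \<in> V \<and> card U = k}. \<tau> ^ (m - card U) * rdetS U j M)
        = (\<Sum>\<alpha> \<in> Iseq k m j. rdet k (sub_pos \<alpha> j) (principal_sub M \<alpha>)) * qreal (t ^ (m - k))"
      unfolding e sum_distrib_right qreal_pow \<tau>_def[symmetric]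
      by (rule sum.cong[OF refl]) (simp add: central_pow[OF cen])
  qed
  finally show ?thesis unfolding M_def[symmetric] rdet_S T_def[symmetric] .
qed

end
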